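(* Let $k \geq 1$ and $m \geq 0$ be integers and put $n = 2k+m$. The number of Riordan paths of length $n$ having exactly $m$ flat steps and exactly $k$ up steps (and hence exactly $k$ down steps) equals $f^{(k,k,1^m)}$, the number of standard Young tableaux of shape $(k,k,1^m)$.
   Context: A Motzkin path of length $n$ is a lattice path from $(0,0)$ to $(n,0)$ using steps $U=(1,1)$, $F=(1,0)$ (flat), $D=(1,-1)$ that never goes below the $x$-axis. A Riordan path is a Motzkin path with no flat step $F$ on the $x$-axis (i.e. every $F$ is preceded by strictly more $U$'s than $D$'s). For a partition $\mu$, $f^\mu$ denotes the number of standard Young tableaux of shape $\mu$; $(k,k,1^m)$ is the partition with two parts equal to $k$ followed by $m$ parts equal to $1$. *)

theory Defs
  imports Main
begin

datatype step = U | F | D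

fun step_val :: "step \<Rightarrow> int" where
  "step_val U = 1" | "step_val F = 0" | "step_val D = -1"

definition height :: "step list \<Rightarrow> nat \<Rightarrow> int" where
  "height w i = (\<Sum>s\<leftarrow>take i w. step_val s)"

definition motzkin_path :: "step list \<Rightarrow> bool" where
  "motzkin_path w \<longleftrightarrow> (\<forall>i\<le>length w. height w i \<ge> 0) \<and> height w (length w) = 0"

definition riordan_path :: "step list \<Rightarrow> bool" where
  "riordan_path w \<longleftrightarrow> motzkin_path w \<and> (\<forall>i<length w. w ! i = F \<longrightarrow> height w i > 0)"

definition riordan_paths :: "nat \<Rightarrow> nat \<Rightarrow> nat \<Rightarrow> step list set" where
  "riordan_paths n m k = {w. length w = n \<and> riordan_path w \<and>
      length (filter (\<lambda>s. s = F) w) = m \<and> length (filter (\<lambda>s. s = U) w) = k}"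

text \<open>Partitions are given as lists of row lengths (weakly decreasing, positive).
  Cells of the Young diagram: (row, column), 0-indexed.\<close>
definition cells :: "nat list \<Rightarrow> (nat \<times> nat) set" where
  "cells \<mu> = {(i, j). i < length \<mu> \<and> j < \<mu> ! i}"

definition syt :: "nat list \<Rightarrow> ((nat \<times> nat) \<Rightarrow> nat) set" where
  "syt \<mu> = {T. bij_betw T (cells \<mu>) {1..sum_list \<mu>} \<and>
      (\<forall>c. c \<notin> cells \<mu> \<longrightarrow> T c = 0) \<and>
      (\<forall>i j. (i, j + 1) \<in> cells \<mu> \<longrightarrow> T (i, j) < T (i, j + 1)) \<and>
      (\<forall>i j. (i + 1, j) \<in> cells \<mu> \<longrightarrow> T (i, j) < T (i + 1, j))}"

definition num_syt :: "nat list \<Rightarrow> nat" ("f\<^bsup>_\<^esup>") where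
  "num_syt \<mu> = card (syt \<mu>)"

end

theory Submission
  imports Defs
begin


definition cnt :: "step \<Rightarrow> step list \<Rightarrow> nat" where
  "cnt s w = length (filter (\<lambda>x. x = s) w)"

lemma cnt_simps[simp]: "cnt s [] = 0" "cnt s (x # w) = (if x = s then Suc (cnt s w) else cnt s w)"
  "cnt s (w1 @ w2) = cnt s w1 + cnt s w2"
  "cnt s (replicate r x) = (if x = s then r else 0)"
  by (auto simp: cnt_def)

lemma length_cnt: "length w = cnt U w + cnt D w + cnt F w"
proof (induction w)
  case (Cons a w) then show ?case by (cases a) auto
qed simp

fun mot :: "nat \<Rightarrow> step list \<Rightarrow> bool" where
  "mot h [] = (h = 0)"
| "mot h (U # w) = mot (Suc h) w"
| "mot h (F # w) = mot h w"
| "mot h (D # w) = (0 < h \<and> mot (h - 1) w)"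

fun rio :: "nat \<Rightarrow> step list \<Rightarrow> bool" where
  "rio h [] = (h = 0)"
| "rio h (U # w) = rio (Suc h) w"
| "rio h (F # w) = (0 < h \<and> rio h w)"
| "rio h (D # w) = (0 < h \<and> rio (h - 1) w)"

fun tr :: "nat \<Rightarrow> step list \<Rightarrow> step list" where
  "tr e [] = []"
| "tr e (U # x) = U # tr (Suc e) x"
| "tr e (F # x) = F # tr e x"
| "tr 0 (D # x) = D # U # tr 0 x"
| "tr (Suc e) (D # x) = D # tr e x"

fun untr :: "nat \<Rightarrow> step list \<Rightarrow> step list" where
  "untr e [] = []"
| "untr e (U # y) = U # untr (Suc e) y"
| "untr e (F # y) = F # untr e y"
| "untr (Suc e) (D # y) = D # untr e y"
| "untr 0 (D # U # y) = D # untr 0 y"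
| "untr 0 (D # y) = D # untr 0 y"

lemma untr_tr: "untr e (tr e x) = x"
proof (induction x arbitrary: e)
  case (Cons a x) then show ?case by (cases a; cases e) auto
qed simp

lemma tr_untr: "rio (Suc e) (y @ [D]) \<Longrightarrow> tr e (untr e y) = y"
  by (induction e y rule: untr.induct) auto

lemma rio_tr: "mot (L + e) x \<Longrightarrow> rio (Suc e) (tr e x @ [D])"
proof (induction x arbitrary: L e)
  case Nil then show ?case by simp
next
  case (Cons a x)
  show ?case
  proof (cases a)
    case U then show ?thesis using Cons by (auto simp: add_Suc_right[symmetric] simp del: add_Suc_right)
  next
    case F then show ?thesis using Cons by auto
  next
    case D
    show ?thesis
    proof (cases e)
      case 0 then show ?thesis using Cons D by (auto intro: Cons.IH[of "L - 1" 0])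
    next
      case (Suc e') then show ?thesis using Cons D by (auto intro: Cons.IH[of L e'])
    qed
  qed
qed

lemma mot_untr: "rio (Suc e) (y @ [D]) \<Longrightarrow> \<exists>L. mot (L + e) (untr e y)"
proof (induction e y rule: untr.induct)
  case (1 e) then show ?case by auto
next
  case (2 e y)
  then obtain L where "mot (L + Suc e) (untr (Suc e) y)" by auto
  then show ?case by (intro exI[of _ L]) auto
next
  case (3 e y) then show ?case by auto
next
  case (4 e y)
  then obtain L where "mot (L + e) (untr e y)" by auto
  then show ?case by (intro exI[of _ L]) auto
next
  case (5 y)
  then obtain L where "mot (L + 0) (untr 0 y)" by auto
  then show ?case by (intro exI[of _ "Suc L"]) auto
qed auto

lemma cnt_tr: "cnt D (tr e x) = cnt D x" "cnt F (tr e x) = cnt F x"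
  by (induction e x rule: tr.induct) auto

lemma cntU_tr: "mot (L + e) x \<Longrightarrow> cnt U (tr e x) = cnt U x + L"
proof (induction x arbitrary: L e)
  case Nil then show ?case by simp
next
  case (Cons a x)
  show ?case
  proof (cases a)
    case U then show ?thesis using Cons.IH[of L "Suc e"] Cons.prems by auto
  next
    case F then show ?thesis using Cons by auto
  next
    case D
    show ?thesis
    proof (cases e)
      case 0 then show ?thesis using Cons.IH[of "L - 1" 0] Cons.prems D by auto
    next
      case (Suc e') then show ?thesis using Cons.IH[of L e'] Cons.prems D by auto
    qed
  qed
qed

lemma mot_rep: "mot h (replicate r U @ w) = mot (h + r) w"
  by (induction r arbitrary: h) auto

lemma mot_cnt: "mot h w \<Longrightarrow> h + cnt U w = cnt D w"
  by (induction h w rule: mot.induct) auto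

lemma rio_mot: "rio h w \<Longrightarrow> mot h w"
  by (induction h w rule: rio.induct) auto

lemma rio_append: "rio h (w1 @ w2) \<Longrightarrow> \<exists>h'. rio h' w2"
  by (induction w1 arbitrary: h) (auto elim: rio.elims)



lemma height_0[simp]: "height w 0 = 0" by (simp add: height_def)
lemma height_Cons_Suc[simp]: "height (s # w) (Suc i) = step_val s + height w i"
  by (simp add: height_def)

lemma all_le_Suc: "(\<forall>i\<le>Suc n. P i) \<longleftrightarrow> P 0 \<and> (\<forall>i\<le>n. P (Suc i))"
  by (metis Suc_le_mono le0 not0_implies_Suc)
lemma all_less_Suc: "(\<forall>i<Suc n. P i) \<longleftrightarrow> P 0 \<and> (\<forall>i<n. P (Suc i))"
  by (metis Suc_less_eq zero_less_Suc not0_implies_Suc)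

lemma mot_height: "mot h w \<longleftrightarrow> (\<forall>i\<le>length w. 0 \<le> int h + height w i) \<and> int h + height w (length w) = 0"
proof (induction w arbitrary: h)
  case Nil then show ?case by simp
next
  case (Cons a w)
  show ?case
  proof (cases a)
    case U then show ?thesis using Cons.IH[of "Suc h"] by (simp only: length_Cons all_le_Suc) (auto simp: algebra_simps)
  next
    case F then show ?thesis using Cons.IH[of h] by (simp only: length_Cons all_le_Suc) (auto simp: algebra_simps)
  next
    case D
    show ?thesis
    proof (cases h)
      case 0 then show ?thesis using D by (simp only: length_Cons all_le_Suc) (auto dest: spec[of _ 0])
    next
      case (Suc h') then show ?thesis using D Cons.IH[of h'] by (simp only: length_Cons all_le_Suc) (auto simp: algebra_simps)
    qed
  qed
qed

lemma rio_height: "rio h w \<longleftrightarrow> mot h w \<and> (\<forall>i<length w. w ! i = F \<longrightarrow> 0 < int h + height w i)"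
proof (induction w arbitrary: h)
  case Nil then show ?case by simp
next
  case (Cons a w)
  show ?case
  proof (cases a)
    case U then show ?thesis using Cons.IH[of "Suc h"] by (simp only: length_Cons all_less_Suc) (auto simp: algebra_simps)
  next
    case F then show ?thesis using Cons.IH[of h] by (simp only: length_Cons all_less_Suc) (auto simp: algebra_simps)
  next
    case D
    show ?thesis
    proof (cases h)
      case 0 then show ?thesis using D by simp
    next
      case (Suc h') then show ?thesis using D Cons.IH[of h'] by (simp only: length_Cons all_less_Suc) (auto simp: algebra_simps)
    qed
  qed
qed

lemma riordan_rio: "riordan_path w \<longleftrightarrow> rio 0 w"
  by (simp add: riordan_path_def rio_height mot_height motzkin_path_def)

lemma motzkin_mot: "motzkin_path w \<longleftrightarrow> mot 0 w"
  by (simp add: mot_height motzkin_path_def)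

lemma height_cnt: "height w i = int (cnt U (take i w)) - int (cnt D (take i w))"
proof (induction w arbitrary: i)
  case Nil then show ?case by (simp add: height_def)
next
  case (Cons a w)
  then show ?case by (cases i; cases a) auto
qed



definition Rset :: "nat \<Rightarrow> nat \<Rightarrow> nat \<Rightarrow> step list set" where
  "Rset n m k = {w. length w = n \<and> rio 0 w \<and> cnt F w = m \<and> cnt U w = k}"

definition Wset :: "nat \<Rightarrow> nat \<Rightarrow> nat \<Rightarrow> step list set" where
  "Wset n m k = {v. length v = n \<and> mot 0 v \<and> cnt F v = m \<and> cnt U v = k \<and>
     (\<forall>i<length v. v ! i = F \<longrightarrow> (\<exists>j<i. v ! j = D))}"

lemma riordan_paths_Rset: "riordan_paths n m k = Rset n m k"
  by (simp add: riordan_paths_def Rset_def riordan_rio cnt_def)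

definition psi :: "step list \<Rightarrow> step list" where
  "psi v = U # tr 0 (drop (Suc (length (takeWhile (\<lambda>s. s = U) v))) v) @ [D]"

lemma psi_rep: "psi (replicate r U @ D # x) = U # tr 0 x @ [D]"
proof -
  have "takeWhile (\<lambda>s. s = U) (replicate r U @ D # x) = replicate r U"
    by (induction r) auto
  then show ?thesis by (simp add: psi_def)
qed

lemma Wform:
  assumes "v \<in> Wset n m k" "1 \<le> k"
  shows "\<exists>r x. v = replicate r U @ D # x \<and> 0 < r \<and> mot (r - 1) x"
proof -
  define t where "t = takeWhile (\<lambda>s. s = U) v"
  define r where "r = length t"
  have "\<forall>y\<in>set t. y = U" unfolding t_def by (auto dest: set_takeWhileD)
  then have tr: "t = replicate r U" unfolding r_def by (simp add: replicate_length_same)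
  have v: "v = t @ dropWhile (\<lambda>s. s = U) v" by (simp add: t_def)
  have m0: "mot 0 v" and cU: "cnt U v = k" using assms by (auto simp: Wset_def)
  have cD: "cnt D v \<ge> 1" using mot_cnt[OF m0] cU assms(2) by simp
  have ne: "dropWhile (\<lambda>s. s = U) v \<noteq> []"
  proof
    assume dw: "dropWhile (\<lambda>s. s = U) v = []"
    have "v = t" using v dw by (metis append_Nil2)
    then have "v = replicate r U" using tr by simp
    then show False using cD by simp
  qed
  then obtain s x where sx: "dropWhile (\<lambda>s. s = U) v = s # x" by (cases "dropWhile (\<lambda>s. s = U) v") auto
  have "s \<noteq> U" using hd_dropWhile[OF ne] sx by simp
  have vv: "v = replicate r U @ s # x" using v tr sx by simp
  have "s \<noteq> F"
  proof
    assume "s = F"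
    then have "v ! r = F" "r < length v" using vv by (auto simp: nth_append)
    then obtain j where "j < r" "v ! j = D" using assms(1) by (auto simp: Wset_def)
    then show False using vv by (simp add: nth_append)
  qed
  then have "s = D" using \<open>s \<noteq> U\<close> by (cases s) auto
  then show ?thesis using vv m0 by (auto simp: mot_rep)
qed

lemma Wmem:
  assumes "0 < r" "mot (r - 1) x" "v = replicate r U @ D # x"
  shows "mot 0 v" "\<forall>i<length v. v ! i = F \<longrightarrow> (\<exists>j<i. v ! j = D)"
proof -
  show "mot 0 v" using assms by (simp add: mot_rep)
  show "\<forall>i<length v. v ! i = F \<longrightarrow> (\<exists>j<i. v ! j = D)"
  proof (intro allI impI)
    fix i assume "i < length v" "v ! i = F"
    have "r < i"
    proof (rule ccontr)
      assume "\<not> r < i"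
      then consider "i < r" | "i = r" by linarith
      then show False
      proof cases
        case 1 then have "v ! i = U" using assms(3) by (simp add: nth_append)
        then show False using \<open>v ! i = F\<close> by simp
      next
        case 2 then have "v ! i = D" using assms(3) by (simp add: nth_append)
        then show False using \<open>v ! i = F\<close> by simp
      qed
    qed
    moreover have "v ! r = D" using assms(3) by (simp add: nth_append)
    ultimately show "\<exists>j<i. v ! j = D" by blast
  qed
qed

lemma rio_shape:
  assumes "rio 0 w" "w \<noteq> []"
  shows "\<exists>y. w = U # y @ [D]"
proof -
  obtain a w' where w: "w = a # w'" using assms(2) by (cases w) auto
  have "a = U" using assms(1) w by (cases a) auto
  then have r1: "rio 1 w'" using assms(1) w by simp
  then have "w' \<noteq> []" by auto
  then obtain y b where yb: "w' = y @ [b]" by (metis rev_exhaust)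
  obtain h where "rio h [b]" using rio_append r1 yb by blast
  then have "b = D" by (cases b) auto
  then show ?thesis using w yb \<open>a = U\<close> by auto
qed

lemma W_R_bij:
  assumes "1 \<le> k"
  shows "bij_betw psi (Wset n m k) (Rset n m k)"
proof (rule bij_betw_imageI)
  show "inj_on psi (Wset n m k)"
  proof (rule inj_onI)
    fix v1 v2 assume v1: "v1 \<in> Wset n m k" and v2: "v2 \<in> Wset n m k" and eq: "psi v1 = psi v2"
    obtain r1 x1 where 1: "v1 = replicate r1 U @ D # x1" "0 < r1" "mot (r1 - 1) x1" using Wform[OF v1 assms] by blast
    obtain r2 x2 where 2: "v2 = replicate r2 U @ D # x2" "0 < r2" "mot (r2 - 1) x2" using Wform[OF v2 assms] by blast
    have "tr 0 x1 = tr 0 x2" using eq 1 2 by (simp add: psi_rep)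
    then have "x1 = x2" by (metis untr_tr)
    moreover have "cnt U v1 = cnt U v2" using v1 v2 by (simp add: Wset_def)
    ultimately have "r1 = r2" using 1 2 by simp
    then show "v1 = v2" using 1 2 \<open>x1 = x2\<close> by simp
  qed
next
  show "psi ` Wset n m k = Rset n m k"
  proof
    show "psi ` Wset n m k \<subseteq> Rset n m k"
    proof
      fix w assume "w \<in> psi ` Wset n m k"
      then obtain v where v: "v \<in> Wset n m k" "w = psi v" by auto
      obtain r x where 1: "v = replicate r U @ D # x" "0 < r" "mot (r - 1) x" using Wform[OF v(1) assms] by blast
      have w: "w = U # tr 0 x @ [D]" using v 1 by (simp add: psi_rep)
      have "rio 0 w" using rio_tr[of "r - 1" 0 x] 1 w by simp
      moreover have "cnt U w = cnt U v" using cntU_tr[of "r - 1" 0 x] 1 w by simp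
      moreover have "cnt F w = cnt F v" "cnt D w = cnt D v" using w 1 by (simp_all add: cnt_tr)
      moreover have "length w = length v" by (metis calculation(2,3,4) length_cnt)
      ultimately show "w \<in> Rset n m k" using v(1) by (simp add: Rset_def Wset_def)
    qed
  next
    show "Rset n m k \<subseteq> psi ` Wset n m k"
    proof
      fix w assume w: "w \<in> Rset n m k"
      then have "w \<noteq> []" using assms by (auto simp: Rset_def)
      then obtain y where y: "w = U # y @ [D]" using rio_shape w by (auto simp: Rset_def)
      have ry: "rio (Suc 0) (y @ [D])" using w y by (simp add: Rset_def)
      obtain L where L: "mot (L + 0) (untr 0 y)" using mot_untr[OF ry] by blast
      define x where "x = untr 0 y"
      have txy: "tr 0 x = y" using tr_untr[OF ry] unfolding x_def by simp
      define v where "v = replicate (Suc L) U @ D # x"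
      have Lx: "mot L x" using L unfolding x_def by simp
      have mv: "mot 0 v" "\<forall>i<length v. v ! i = F \<longrightarrow> (\<exists>j<i. v ! j = D)"
        using Wmem[of "Suc L" x v] Lx v_def by auto
      have "psi v = U # tr 0 x @ [D]" unfolding v_def by (rule psi_rep)
      then have pv: "psi v = w" using y txy by simp
      have "cnt U w = cnt U v" using cntU_tr[of L 0 x] Lx y txy v_def by simp
      moreover have "cnt F w = cnt F v" "cnt D w = cnt D v" using y txy v_def cnt_tr[of 0 x] by auto
      moreover have "length w = length v" by (metis calculation length_cnt)
      ultimately have "v \<in> Wset n m k" using w mv by (simp add: Rset_def Wset_def)
      then show "w \<in> psi ` Wset n m k" using pv by blast
    qed
  qed
qed



definition posl :: "step list \<Rightarrow> step \<Rightarrow> nat list" where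
  "posl v s = filter (\<lambda>i. v ! i = s) [0..<length v]"

lemma posl_sorted: "sorted_wrt (<) (posl v s)"
  unfolding posl_def by (rule sorted_wrt_filter) simp

lemma posl_set: "set (posl v s) = {i. i < length v \<and> v ! i = s}"
  unfolding posl_def by auto

lemma posl_length: "length (posl v s) = cnt s v"
  unfolding posl_def cnt_def length_filter_conv_card by (rule arg_cong[where f=card]) auto

lemma posl_nth: "j < cnt s v \<Longrightarrow> posl v s ! j < length v \<and> v ! (posl v s ! j) = s"
proof -
  assume "j < cnt s v"
  then have "posl v s ! j \<in> set (posl v s)" by (simp add: posl_length[symmetric])
  then show ?thesis by (simp add: posl_set)
qed

lemma posl_inj: "j < cnt s v \<Longrightarrow> j' < cnt s v \<Longrightarrow> posl v s ! j = posl v s ! j' \<Longrightarrow> j = j'"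
  using posl_sorted[of v s] by (metis posl_length nat_neq_iff order_less_irrefl sorted_wrt_nth_less)

lemma posl_mono: "j < j' \<Longrightarrow> j' < cnt s v \<Longrightarrow> posl v s ! j < posl v s ! j'"
  using posl_sorted[of v s] by (metis posl_length sorted_wrt_nth_less)

lemma posl_take_split:
  "posl v s = posl (take i v) s @ filter (\<lambda>p. v ! p = s) [min i (length v)..<length v]"
proof -
  have "[0..<length v] = [0..<min i (length v)] @ [min i (length v)..<length v]"
    using upt_add_eq_append[of 0 "min i (length v)" "length v - min i (length v)"] by (simp add: min_def)
  moreover have "filter (\<lambda>p. v ! p = s) [0..<min i (length v)] = posl (take i v) s"
    unfolding posl_def by (intro filter_cong) (auto simp: min.commute)
  ultimately show ?thesis unfolding posl_def by simp
qed

lemma posl_take: "posl (take i v) s = filter (\<lambda>p. p < i) (posl v s)"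
proof -
  have A: "\<forall>p\<in>set (posl (take i v) s). p < i" by (auto simp: posl_set)
  have B: "\<forall>p\<in>set (filter (\<lambda>p. v ! p = s) [min i (length v)..<length v]). \<not> p < i" by auto
  have "filter (\<lambda>p. p < i) (posl v s) = filter (\<lambda>p. p < i) (posl (take i v) s) @ filter (\<lambda>p. p < i) (filter (\<lambda>p. v ! p = s) [min i (length v)..<length v])"
    by (subst posl_take_split[of v s i]) (simp only: filter_append)
  also have "\<dots> = posl (take i v) s"
  proof -
    have 1: "filter (\<lambda>p. p < i) (posl (take i v) s) = posl (take i v) s" using A by (simp only: filter_id_conv)
    have 2: "filter (\<lambda>p. p < i) (filter (\<lambda>p. v ! p = s) [min i (length v)..<length v]) = []"
      using B by (simp only: filter_empty_conv)
    show ?thesis by (simp only: 1 2 append_Nil2)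
  qed
  finally show ?thesis by simp
qed

lemma K: "j < cnt s (take i v) \<Longrightarrow> posl v s ! j < i"
proof -
  assume a: "j < cnt s (take i v)"
  have "posl v s ! j = posl (take i v) s ! j"
    using a by (subst posl_take_split[of v s i]) (simp add: nth_append posl_length)
  moreover have "posl (take i v) s ! j \<in> set (posl (take i v) s)" using a by (simp add: posl_length[symmetric])
  ultimately show ?thesis by (auto simp: posl_set)
qed

lemma Cn: "j < cnt s v \<Longrightarrow> cnt s (take (posl v s ! j) v) = j"
proof -
  assume a: "j < cnt s v"
  define i where "i = posl v s ! j"
  have il: "i < length v" using posl_nth[OF a] i_def by simp
  have "cnt s (take i v) = length (filter (\<lambda>p. p < i) (posl v s))"
    by (simp add: posl_take[symmetric] posl_length)
  also have "\<dots> = card {l. l < length (posl v s) \<and> posl v s ! l < i}"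
    by (simp add: length_filter_conv_card)
  also have "{l. l < length (posl v s) \<and> posl v s ! l < i} = {..<j}"
  proof (intro set_eqI iffI)
    fix l assume "l \<in> {l. l < length (posl v s) \<and> posl v s ! l < i}"
    then have "l < cnt s v" "posl v s ! l < posl v s ! j" by (auto simp: posl_length i_def)
    then show "l \<in> {..<j}" using posl_mono[of j l s v] a by (cases "l < j"; cases "l = j") auto
  next
    fix l assume "l \<in> {..<j}"
    then show "l \<in> {l. l < length (posl v s) \<and> posl v s ! l < i}"
      using a posl_mono[of l j s v] by (auto simp: posl_length i_def)
  qed
  finally show ?thesis by (simp add: i_def)
qed

lemma cnt_pos: "s \<in> set w \<Longrightarrow> 0 < cnt s w"
  by (induction w) auto



definition mu :: "nat \<Rightarrow> nat \<Rightarrow> nat list" where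
  "mu k m = [k, k] @ replicate m 1"

lemma cells_char:
  assumes "1 \<le> k"
  shows "(i, j) \<in> cells (mu k m) \<longleftrightarrow> (i = 0 \<and> j < k) \<or> (i = 1 \<and> j < k) \<or> (2 \<le> i \<and> i < m + 2 \<and> j = 0)"
proof -
  have "i < length (mu k m) \<longleftrightarrow> i < m + 2" by (simp add: mu_def)
  moreover have "i \<ge> 2 \<Longrightarrow> i < m + 2 \<Longrightarrow> mu k m ! i = 1" by (simp add: mu_def nth_append)
  moreover have "mu k m ! 0 = k" "mu k m ! 1 = k" by (simp_all add: mu_def)
  ultimately show ?thesis unfolding cells_def using assms
    by (cases "i = 0"; cases "i = 1") auto
qed

lemma sum_mu: "sum_list (mu k m) = 2 * k + m"
  by (simp add: mu_def sum_list_replicate)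

definition tab :: "nat \<Rightarrow> nat \<Rightarrow> step list \<Rightarrow> nat \<times> nat \<Rightarrow> nat" where
  "tab k m v = (\<lambda>(i, j). if i = 0 \<and> j < k then posl v U ! j + 1
      else if i = 1 \<and> j < k then posl v D ! j + 1
      else if 2 \<le> i \<and> i < m + 2 \<and> j = 0 then posl v F ! (i - 2) + 1 else 0)"

definition wrd :: "nat \<Rightarrow> nat \<Rightarrow> (nat \<times> nat \<Rightarrow> nat) \<Rightarrow> step list" where
  "wrd k n T = map (\<lambda>t. if (\<exists>j<k. T (0, j) = t) then U else if (\<exists>j<k. T (1, j) = t) then D else F) [1..<n+1]"

lemma tab0: "j < k \<Longrightarrow> tab k m v (0, j) = posl v U ! j + 1" by (simp add: tab_def)
lemma tab1: "j < k \<Longrightarrow> tab k m v (1, j) = posl v D ! j + 1" by (simp add: tab_def)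
lemma tab1': "j < k \<Longrightarrow> tab k m v (Suc 0, j) = posl v D ! j + 1" by (simp add: tab_def)
lemma tab2: "2 \<le> i \<Longrightarrow> i < m + 2 \<Longrightarrow> tab k m v (i, 0) = posl v F ! (i - 2) + 1" by (simp add: tab_def)

lemma wrd_nth: "p < n \<Longrightarrow> wrd k n T ! p = (if (\<exists>j<k. T (0, j) = p + 1) then U else if (\<exists>j<k. T (1, j) = p + 1) then D else F)"
proof -
  assume p: "p < n"
  have "[1..<n+1] ! p = p + 1" using p nth_upt[of 1 p "n+1"] by (simp del: upt_Suc)
  moreover have "p < length [1..<n+1]" using p by (simp del: upt_Suc)
  ultimately show ?thesis unfolding wrd_def by (simp del: upt_Suc)
qed

lemma wrd_length[simp]: "length (wrd k n T) = n" by (simp add: wrd_def)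

lemma tabB:
  assumes v: "v \<in> Wset n m k" and k: "1 \<le> k" and n: "n = 2 * k + m"
  shows "tab k m v \<in> syt (mu k m)" "wrd k n (tab k m v) = v"
proof -
  have lv: "length v = n" and m0: "mot 0 v" and cF: "cnt F v = m" and cU: "cnt U v = k"
    and Fc: "\<forall>i<length v. v ! i = F \<longrightarrow> (\<exists>j<i. v ! j = D)" using v by (auto simp: Wset_def)
  have cD: "cnt D v = k" using mot_cnt[OF m0] cU by simp
  define T where "T = tab k m v"
  note PU = posl_nth[of _ U v, unfolded cU lv]
  note PD = posl_nth[of _ D v, unfolded cD lv]
  note PF = posl_nth[of _ F v, unfolded cF lv]
  note IU = posl_inj[of _ U v, unfolded cU]
  note ID = posl_inj[of _ D v, unfolded cD]
  note IF = posl_inj[of _ F v, unfolded cF]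
  have ballot: "posl v U ! j < posl v D ! j" if "j < k" for j
  proof -
    define q where "q = posl v D ! j"
    have q: "q < n" "v ! q = D" using PD[OF that] q_def by auto
    have c1: "cnt D (take q v) = j" using Cn[of j D v] that cD q_def by simp
    have tk: "take (Suc q) v = take q v @ [D]" using q lv by (simp add: take_Suc_conv_app_nth)
    have "0 \<le> height v (Suc q)" using m0 q lv by (simp add: mot_height)
    then have "j + 1 \<le> cnt U (take (Suc q) v)" using c1 tk by (simp add: height_cnt)
    then have "j < cnt U (take q v)" using tk by simp
    then show ?thesis using K q_def by blast
  qed
  have DF: "posl v D ! 0 < posl v F ! 0" if "0 < m"
  proof -
    define r where "r = posl v F ! 0"
    have r: "r < n" "v ! r = F" using PF[OF that] r_def by auto
    then obtain j where j: "j < r" "v ! j = D" using Fc lv by auto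
    then have "D \<in> set (take r v)" using r lv by (auto simp: in_set_conv_nth intro!: exI[of _ j])
    then have "0 < cnt D (take r v)" by (rule cnt_pos)
    then show ?thesis using K r_def by blast
  qed
  have cellsT: "c \<in> cells (mu k m) \<longleftrightarrow> (fst c = 0 \<and> snd c < k) \<or> (fst c = 1 \<and> snd c < k) \<or> (2 \<le> fst c \<and> fst c < m + 2 \<and> snd c = 0)" for c
    using cells_char[OF k, of "fst c" "snd c"] by simp
  define cl :: "nat \<times> nat \<Rightarrow> step" where "cl = (\<lambda>(i, j). if i = 0 then U else if i = 1 then D else F)"
  define ix :: "nat \<times> nat \<Rightarrow> nat" where "ix = (\<lambda>(i, j). if i \<le> 1 then j else i - 2)"
  define mk :: "step \<Rightarrow> nat \<Rightarrow> nat \<times> nat" where "mk = (\<lambda>s x. if s = U then (0, x) else if s = D then (1, x) else (x + 2, 0))"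
  have cfact: "T c = posl v (cl c) ! ix c + 1 \<and> ix c < cnt (cl c) v \<and> c = mk (cl c) (ix c)"
    if c: "c \<in> cells (mu k m)" for c
  proof -
    obtain i j where cij: "c = (i, j)" by fastforce
    consider "i = 0" "j < k" | "i = 1" "j < k" | "2 \<le> i" "i < m + 2" "j = 0"
      using c cij cellsT by auto
    then show ?thesis
    proof cases
      case 1 then show ?thesis using cij cU by (simp add: T_def tab0 cl_def ix_def mk_def)
    next
      case 2 then show ?thesis using cij cD by (simp add: T_def tab1 tab1' cl_def ix_def mk_def)
    next
      case 3 then have "i - 2 < m" "i = Suc (Suc (i - 2))" by auto
      then show ?thesis using 3 cij cF by (simp add: T_def tab2 cl_def ix_def mk_def)
    qed
  qed
  have pfact: "posl v s ! x < n \<and> v ! (posl v s ! x) = s" if "x < cnt s v" for s x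
    using posl_nth[OF that] lv by simp
  have inj: "inj_on T (cells (mu k m))"
  proof (rule inj_onI)
    fix c1 c2 assume c1: "c1 \<in> cells (mu k m)" and c2: "c2 \<in> cells (mu k m)" and eq: "T c1 = T c2"
    have f1: "T c1 = posl v (cl c1) ! ix c1 + 1" "ix c1 < cnt (cl c1) v" "c1 = mk (cl c1) (ix c1)" using cfact[OF c1] by auto
    have f2: "T c2 = posl v (cl c2) ! ix c2 + 1" "ix c2 < cnt (cl c2) v" "c2 = mk (cl c2) (ix c2)" using cfact[OF c2] by auto
    have pe: "posl v (cl c1) ! ix c1 = posl v (cl c2) ! ix c2" using eq f1 f2 by simp
    have "cl c1 = v ! (posl v (cl c1) ! ix c1)" using pfact[OF f1(2)] by simp
    also have "\<dots> = cl c2" using pe pfact[OF f2(2)] by simp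
    finally have cle: "cl c1 = cl c2" .
    then have "ix c1 = ix c2" using pe posl_inj[of "ix c1" "cl c1" v "ix c2"] f1(2) f2(2) by simp
    then show "c1 = c2" using f1(3) f2(3) cle by metis
  qed
  have img: "T ` cells (mu k m) = {1..n}"
  proof
    show "T ` cells (mu k m) \<subseteq> {1..n}"
    proof
      fix t assume "t \<in> T ` cells (mu k m)"
      then obtain c where c: "c \<in> cells (mu k m)" and t: "t = T c" by auto
      show "t \<in> {1..n}" using cfact[OF c] pfact[of "ix c" "cl c"] t by auto
    qed
  next
    show "{1..n} \<subseteq> T ` cells (mu k m)"
    proof
      fix t assume t: "t \<in> {1..n}"
      define p where "p = t - 1"
      have p: "p < length v" "t = p + 1" using t lv p_def by auto
      consider "v ! p = U" | "v ! p = D" | "v ! p = F" by (cases "v ! p") auto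
      then show "t \<in> T ` cells (mu k m)"
      proof cases
        case 1
        then have "p \<in> set (posl v U)" using p by (simp add: posl_set)
        then obtain j where "j < k" "posl v U ! j = p" by (auto simp: in_set_conv_nth posl_length cU)
        then show ?thesis using p unfolding T_def by (intro image_eqI[of _ _ "(0, j)"]) (auto simp: tab0 cellsT)
      next
        case 2
        then have "p \<in> set (posl v D)" using p by (simp add: posl_set)
        then obtain j where "j < k" "posl v D ! j = p" by (auto simp: in_set_conv_nth posl_length cD)
        then show ?thesis using p unfolding T_def by (intro image_eqI[of _ _ "(1, j)"]) (auto simp: tab1 tab1' cellsT)
      next
        case 3
        then have "p \<in> set (posl v F)" using p by (simp add: posl_set)
        then obtain j where "j < m" "posl v F ! j = p" by (auto simp: in_set_conv_nth posl_length cF)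
        then show ?thesis using p unfolding T_def by (intro image_eqI[of _ _ "(j + 2, 0)"]) (auto simp: tab2 cellsT)
      qed
    qed
  qed
  have zero: "\<forall>c. c \<notin> cells (mu k m) \<longrightarrow> T c = 0"
    unfolding T_def tab_def cellsT by auto
  have rows: "\<forall>i j. (i, j + 1) \<in> cells (mu k m) \<longrightarrow> T (i, j) < T (i, j + 1)"
  proof (intro allI impI)
    fix i j assume "(i, j + 1) \<in> cells (mu k m)"
    then consider "i = 0" "j + 1 < k" | "i = 1" "j + 1 < k" unfolding cellsT by auto
    then show "T (i, j) < T (i, j + 1)"
    proof cases
      case 1 then show ?thesis unfolding T_def using posl_mono[of j "j+1" U v] cU by (simp add: tab0)
    next
      case 2 then show ?thesis unfolding T_def using posl_mono[of j "j+1" D v] cD by (simp add: tab1 tab1')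
    qed
  qed
  have cols: "\<forall>i j. (i + 1, j) \<in> cells (mu k m) \<longrightarrow> T (i, j) < T (i + 1, j)"
  proof (intro allI impI)
    fix i j assume "(i + 1, j) \<in> cells (mu k m)"
    then have "(i = 0 \<and> j < k) \<or> (i = 1 \<and> j = 0 \<and> 0 < m) \<or> (2 \<le> i \<and> i + 1 < m + 2 \<and> j = 0)"
      unfolding cellsT by auto
    then consider "i = 0" "j < k" | "i = 1" "j = 0" "0 < m" | "2 \<le> i" "i + 1 < m + 2" "j = 0" by blast
    then show "T (i, j) < T (i + 1, j)"
    proof cases
      case 1 then show ?thesis unfolding T_def using ballot[of j] by (simp add: tab0 tab1 tab1')
    next
      case 2 then show ?thesis unfolding T_def using DF k by (simp add: tab1 tab1' tab2)
    next
      case 3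
      then have "i - 2 < i + 1 - 2" "i + 1 - 2 < m" by auto
      then have "posl v F ! (i - 2) < posl v F ! (i + 1 - 2)" using posl_mono[of "i - 2" "i + 1 - 2" F v] cF by simp
      then show ?thesis unfolding T_def using 3 by (simp add: tab2)
    qed
  qed
  show "tab k m v \<in> syt (mu k m)"
    unfolding syt_def sum_mu T_def[symmetric] using inj img zero rows cols n
    by (simp add: bij_betw_def)
  show "wrd k n (tab k m v) = v"
  proof (rule nth_equalityI)
    show "length (wrd k n (tab k m v)) = length v" using lv by simp
  next
    fix p assume "p < length (wrd k n (tab k m v))"
    then have p: "p < n" by simp
    have U_iff: "(\<exists>j<k. tab k m v (0, j) = p + 1) \<longleftrightarrow> v ! p = U"
    proof
      assume "\<exists>j<k. tab k m v (0, j) = p + 1"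
      then obtain j where "j < k" "posl v U ! j = p" by (auto simp: tab0)
      then show "v ! p = U" using PU by blast
    next
      assume "v ! p = U"
      then have "p \<in> set (posl v U)" using p lv by (simp add: posl_set)
      then obtain j where "j < k" "posl v U ! j = p" by (auto simp: in_set_conv_nth posl_length cU)
      then show "\<exists>j<k. tab k m v (0, j) = p + 1" by (auto simp: tab0)
    qed
    have D_iff: "(\<exists>j<k. tab k m v (1, j) = p + 1) \<longleftrightarrow> v ! p = D"
    proof
      assume "\<exists>j<k. tab k m v (1, j) = p + 1"
      then obtain j where "j < k" "posl v D ! j = p" by (auto simp: tab1 tab1')
      then show "v ! p = D" using PD by blast
    next
      assume "v ! p = D"
      then have "p \<in> set (posl v D)" using p lv by (simp add: posl_set)
      then obtain j where "j < k" "posl v D ! j = p" by (auto simp: in_set_conv_nth posl_length cD)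
      then show "\<exists>j<k. tab k m v (1, j) = p + 1" by (auto simp: tab1 tab1')
    qed
    show "wrd k n (tab k m v) ! p = v ! p"
      using U_iff D_iff p by (cases "v ! p") (simp_all add: wrd_nth)
  qed
qed



lemma smono: "(\<And>j. Suc j < N \<Longrightarrow> f j < f (Suc j)) \<Longrightarrow> i < j \<Longrightarrow> j < N \<Longrightarrow> (f i :: nat) < f j"
proof (induction j)
  case 0 then show ?case by simp
next
  case (Suc j)
  then show ?case by (cases "i = j") (auto intro: less_trans)
qed

lemma LPOS:
  assumes "\<And>j. Suc j < N \<Longrightarrow> f j < f (Suc j)"
    and "\<And>p. p < length v \<Longrightarrow> v ! p = s \<longleftrightarrow> (\<exists>j<N. f j = p)"
    and "\<And>j. j < N \<Longrightarrow> f j < length v"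
  shows "posl v s = map f [0..<N]"
proof (rule sorted_distinct_set_unique)
  show "sorted (posl v s)" "distinct (posl v s)" using posl_sorted[of v s] by (simp_all add: strict_sorted_iff)
  have "sorted_wrt (<) (map f [0..<N])"
    unfolding sorted_wrt_iff_nth_less using smono[of N f, OF assms(1)] by auto
  then show "sorted (map f [0..<N])" "distinct (map f [0..<N])" by (simp_all add: strict_sorted_iff)
  show "set (posl v s) = set (map f [0..<N])"
  proof (rule set_eqI)
    fix p
    have 1: "p \<in> set (posl v s) \<longleftrightarrow> p < length v \<and> v ! p = s" by (simp add: posl_set)
    have 2: "p \<in> set (map f [0..<N]) \<longleftrightarrow> (\<exists>j<N. f j = p)" by auto
    show "p \<in> set (posl v s) \<longleftrightarrow> p \<in> set (map f [0..<N])"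
      unfolding 1 2 using assms(2)[of p] assms(3) by blast
  qed
qed

lemma LF: "(\<And>j. j < N \<Longrightarrow> P j \<Longrightarrow> Q j) \<Longrightarrow> length (filter P [0..<N]) \<le> length (filter Q [0..<N])"
  by (induction N) auto

lemma tabA:
  assumes T: "T \<in> syt (mu k m)" and k: "1 \<le> k" and n: "n = 2 * k + m"
  shows "wrd k n T \<in> Wset n m k" "tab k m (wrd k n T) = T"
proof -
  let ?C = "cells (mu k m)"
  have bij: "bij_betw T ?C {1..n}" and Tz: "\<And>c. c \<notin> ?C \<Longrightarrow> T c = 0"
    and rows: "\<And>i j. (i, j + 1) \<in> ?C \<Longrightarrow> T (i, j) < T (i, j + 1)"
    and cols: "\<And>i j. (i + 1, j) \<in> ?C \<Longrightarrow> T (i, j) < T (i + 1, j)"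
    using T n by (auto simp: syt_def sum_mu)
  have cellsT: "c \<in> ?C \<longleftrightarrow> (fst c = 0 \<and> snd c < k) \<or> (fst c = 1 \<and> snd c < k) \<or> (2 \<le> fst c \<and> fst c < m + 2 \<and> snd c = 0)" for c
    using cells_char[OF k, of "fst c" "snd c"] by simp
  have Tin: "c \<in> ?C \<Longrightarrow> 1 \<le> T c \<and> T c \<le> n" for c using bij by (auto simp: bij_betw_def)
  have Tinj: "c1 \<in> ?C \<Longrightarrow> c2 \<in> ?C \<Longrightarrow> T c1 = T c2 \<Longrightarrow> c1 = c2" for c1 c2
    using bij by (auto simp: bij_betw_def inj_on_def)
  have Tsurj: "1 \<le> t \<Longrightarrow> t \<le> n \<Longrightarrow> \<exists>c\<in>?C. T c = t" for t
  proof -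
    assume "1 \<le> t" "t \<le> n"
    then have "t \<in> T ` ?C" using bij unfolding bij_betw_def by simp
    then show ?thesis by blast
  qed
  have c0: "j < k \<Longrightarrow> (0, j) \<in> ?C" for j using cellsT by simp
  have c1: "j < k \<Longrightarrow> (1, j) \<in> ?C" for j using cellsT by simp
  have c2: "2 \<le> i \<Longrightarrow> i < m + 2 \<Longrightarrow> (i, 0) \<in> ?C" for i using cellsT by simp
  define v where "v = wrd k n T"
  have lv: "length v = n" by (simp add: v_def)
  have vnth: "p < n \<Longrightarrow> v ! p = (if (\<exists>j<k. T (0, j) = p + 1) then U else if (\<exists>j<k. T (1, j) = p + 1) then D else F)" for p
    by (simp add: v_def wrd_nth)
  have vU: "p < n \<Longrightarrow> v ! p = U \<longleftrightarrow> (\<exists>j<k. T (0, j) - 1 = p)" for p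
  proof -
    assume p: "p < n"
    have "(\<exists>j<k. T (0, j) = p + 1) \<longleftrightarrow> (\<exists>j<k. T (0, j) - 1 = p)"
      using Tin[OF c0] by (metis Suc_diff_1 Suc_eq_plus1 add_diff_cancel_right' less_le_trans zero_less_one)
    then show ?thesis using vnth[OF p] by auto
  qed
  have vD: "p < n \<Longrightarrow> v ! p = D \<longleftrightarrow> (\<exists>j<k. T (1, j) - 1 = p)" for p
  proof -
    assume p: "p < n"
    have e1: "(\<exists>j<k. T (1, j) = p + 1) \<longleftrightarrow> (\<exists>j<k. T (1, j) - 1 = p)"
      using Tin[OF c1] by (metis Suc_diff_1 Suc_eq_plus1 add_diff_cancel_right' less_le_trans zero_less_one)
    have "\<not> (\<exists>j<k. T (0, j) = p + 1)" if hh: "\<exists>j<k. T (1, j) = p + 1"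
    proof
      assume "\<exists>j<k. T (0, j) = p + 1"
      then obtain j where "j < k" "T (0, j) = p + 1" by blast
      moreover obtain j' where "j' < k" "T (1, j') = p + 1" using hh by blast
      ultimately have "(0::nat, j) = (1, j')" using Tinj[OF c0 c1] by metis
      then show False by simp
    qed
    then show ?thesis using vnth[OF p] e1 by auto
  qed
  have vF: "p < n \<Longrightarrow> v ! p = F \<longleftrightarrow> (\<exists>i<m. T (i + 2, 0) - 1 = p)" for p
  proof -
    assume p: "p < n"
    have "v ! p = F \<longleftrightarrow> \<not> (\<exists>j<k. T (0, j) = p + 1) \<and> \<not> (\<exists>j<k. T (1, j) = p + 1)"
      using vnth[OF p] by auto
    also have "\<dots> \<longleftrightarrow> (\<exists>i<m. T (i + 2, 0) = p + 1)"
    proof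
      assume a: "\<not> (\<exists>j<k. T (0, j) = p + 1) \<and> \<not> (\<exists>j<k. T (1, j) = p + 1)"
      obtain c where c: "c \<in> ?C" "T c = p + 1" using Tsurj[of "p + 1"] p by auto
      obtain i j where cij: "c = (i, j)" by fastforce
      have h3: "2 \<le> i \<and> i < m + 2 \<and> j = 0" using a c cij cellsT[of c] by auto
      then have "i - 2 < m" "i - 2 + 2 = i" by auto
      moreover have "j = 0" using h3 by simp
      ultimately show "\<exists>i<m. T (i + 2, 0) = p + 1" using c cij by (intro exI[of _ "i - 2"]) auto
    next
      assume "\<exists>i<m. T (i + 2, 0) = p + 1"
      then obtain i where i: "i < m" "T (i + 2, 0) = p + 1" by blast
      have ci: "(i + 2, 0) \<in> ?C" using i c2 by simp
      show "\<not> (\<exists>j<k. T (0, j) = p + 1) \<and> \<not> (\<exists>j<k. T (1, j) = p + 1)"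
        using Tinj[OF ci c0] Tinj[OF ci c1] i by force
    qed
    also have "\<dots> \<longleftrightarrow> (\<exists>i<m. T (i + 2, 0) - 1 = p)"
      using Tin[OF c2] by (metis Suc_diff_1 Suc_eq_plus1 add_diff_cancel_right' le_add2 less_le_trans zero_less_one add_less_cancel_right)
    finally show ?thesis .
  qed
  have PU: "posl v U = map (\<lambda>j. T (0, j) - 1) [0..<k]"
  proof (rule LPOS)
    show "T (0, j) - 1 < T (0, Suc j) - 1" if "Suc j < k" for j
      using rows[of 0 j] c0[OF that] Tin[OF c0[of j]] that by (simp; arith)
    show "v ! p = U \<longleftrightarrow> (\<exists>j<k. T (0, j) - 1 = p)" if "p < length v" for p using vU that lv by simp
    show "T (0, j) - 1 < length v" if "j < k" for j using Tin[OF c0[OF that]] lv by (simp; arith)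
  qed
  have PD: "posl v D = map (\<lambda>j. T (1, j) - 1) [0..<k]"
  proof (rule LPOS)
    show "T (1, j) - 1 < T (1, Suc j) - 1" if "Suc j < k" for j
      using rows[of 1 j] c1[OF that] Tin[OF c1[of j]] that by (simp; arith)
    show "v ! p = D \<longleftrightarrow> (\<exists>j<k. T (1, j) - 1 = p)" if "p < length v" for p using vD that lv by simp
    show "T (1, j) - 1 < length v" if "j < k" for j using Tin[OF c1[OF that]] lv by (simp; arith)
  qed
  have PF: "posl v F = map (\<lambda>i. T (i + 2, 0) - 1) [0..<m]"
  proof (rule LPOS)
    show "T (j + 2, 0) - 1 < T (Suc j + 2, 0) - 1" if "Suc j < m" for j
      using cols[of "j + 2" 0] c2[of "Suc j + 2"] Tin[OF c2[of "j + 2"]] that by (simp; arith)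
    show "v ! p = F \<longleftrightarrow> (\<exists>j<m. T (j + 2, 0) - 1 = p)" if "p < length v" for p using vF that lv by simp
    show "T (j + 2, 0) - 1 < length v" if "j < m" for j using Tin[OF c2[of "j + 2"]] that lv by (simp; arith)
  qed
  have cU: "cnt U v = k" using PU posl_length[of v U] by simp
  have cD: "cnt D v = k" using PD posl_length[of v D] by simp
  have cF: "cnt F v = m" using PF posl_length[of v F] by simp
  have ht: "0 \<le> height v i" for i
  proof -
    have "cnt D (take i v) = length (filter (\<lambda>p. p < i) (posl v D))" by (simp add: posl_take[symmetric] posl_length)
    also have "\<dots> = length (filter (\<lambda>j. T (1, j) - 1 < i) [0..<k])" by (simp add: PD filter_map o_def)
    also have "\<dots> \<le> length (filter (\<lambda>j. T (0, j) - 1 < i) [0..<k])"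
    proof (rule LF)
      fix j assume "j < k" "T (1, j) - 1 < i"
      moreover have "T (0, j) < T (1, j)" using cols[of 0 j] c1[OF \<open>j < k\<close>] by simp
      ultimately show "T (0, j) - 1 < i" by linarith
    qed
    also have "\<dots> = length (filter (\<lambda>p. p < i) (posl v U))" by (simp add: PU filter_map o_def)
    also have "\<dots> = cnt U (take i v)" by (simp add: posl_take[symmetric] posl_length)
    finally show ?thesis by (simp add: height_cnt)
  qed
  have hn: "height v (length v) = 0" using cU cD by (simp add: height_cnt)
  have m0: "mot 0 v" using ht hn by (simp add: mot_height)
  have Fc: "\<forall>p<length v. v ! p = F \<longrightarrow> (\<exists>j<p. v ! j = D)"
  proof (intro allI impI)
    fix p assume p: "p < length v" and vp: "v ! p = F"
    then obtain i where i: "i < m" "T (i + 2, 0) - 1 = p" using vF lv by auto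
    have mono: "T (x + 1, 0) < T (Suc x + 1, 0)" if "Suc x < m + 1" for x
    proof -
      have "(Suc x + 1, 0) \<in> ?C" using c2[of "Suc x + 1"] that by simp
      then show ?thesis using cols[of "x + 1" 0] by simp
    qed
    have "T (0 + 1, 0) < T ((i + 1) + 1, 0)"
      using smono[of "m + 1" "\<lambda>x. T (x + 1, 0)" 0 "i + 1", OF mono] i(1) by simp
    then have "T (1, 0) < T (i + 2, 0)" by (simp add: numeral_2_eq_2)
    moreover have "1 \<le> T (1, 0)" using Tin[OF c1[of 0]] k by simp
    ultimately have lt: "T (1, 0) - 1 < p" using i(2) by linarith
    have "\<exists>j<k. T (1, j) - 1 = T (1, 0) - 1" using k by (intro exI[of _ 0]) simp
    then have "v ! (T (1, 0) - 1) = D" using vD[of "T (1, 0) - 1"] lt p lv by simp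
    then show "\<exists>j<p. v ! j = D" using lt by blast
  qed
  show "wrd k n T \<in> Wset n m k" using lv m0 cF cU Fc by (simp add: Wset_def v_def[symmetric])
  show "tab k m (wrd k n T) = T"
  proof
    fix c :: "nat \<times> nat"
    obtain i j where cij: "c = (i, j)" by fastforce
    show "tab k m (wrd k n T) c = T c"
    proof (cases "c \<in> ?C")
      case False
      then show ?thesis using Tz[OF False] cij cellsT[of c] by (auto simp: tab_def)
    next
      case True
      then consider "i = 0" "j < k" | "i = 1" "j < k" | "2 \<le> i" "i < m + 2" "j = 0" using cij cellsT by auto
      then show ?thesis
      proof cases
        case 1 then show ?thesis using cij Tin[OF c0[of j]] by (simp add: tab0 v_def[symmetric] PU)
      next
        case 2 then show ?thesis using cij Tin[OF c1[of j]] by (simp add: tab1' v_def[symmetric] PD)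
      next
        case 3
        then have "i - 2 < m" "i - 2 + 2 = i" by auto
        then show ?thesis using 3 cij Tin[OF c2[of i]] by (simp add: tab2 v_def[symmetric] PF)
      qed
    qed
  qed
qed


theorem proposition1p2:
  fixes k m n :: nat
  assumes "k \<ge> 1" and "n = 2 * k + m"
  shows "card (riordan_paths n m k) = num_syt ([k, k] @ replicate m 1)"
proof -
  have b1: "bij_betw (wrd k n) (syt (mu k m)) (Wset n m k)"
  proof (rule bij_betw_byWitness[where f' = "tab k m"])
    show "\<forall>a\<in>syt (mu k m). tab k m (wrd k n a) = a" using tabA assms by blast
    show "\<forall>a'\<in>Wset n m k. wrd k n (tab k m a') = a'" using tabB assms by blast
    show "wrd k n ` syt (mu k m) \<subseteq> Wset n m k" using tabA assms by blast
    show "tab k m ` Wset n m k \<subseteq> syt (mu k m)" using tabB assms by blast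
  qed
  have b2: "bij_betw psi (Wset n m k) (Rset n m k)" using W_R_bij assms by blast
  have "card (riordan_paths n m k) = card (Rset n m k)" by (simp add: riordan_paths_Rset)
  also have "\<dots> = card (Wset n m k)" using bij_betw_same_card[OF b2] by simp
  also have "\<dots> = card (syt (mu k m))" using bij_betw_same_card[OF b1] by simp
  finally show ?thesis by (simp add: num_syt_def mu_def)
qed

end
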